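(* Let $X$ be a $T_1$ space with $|X|<\mathfrak d$. Then $X$ is set strongly star Menger if and only if $e(X)=\omega$.
   Context: For a family $\mathcal U$ of subsets of $X$ and $A\subseteq X$, $st(A,\mathcal U)=\bigcup\{U\in\mathcal U: U\cap A\neq\emptyset\}$. $X$ is set strongly star Menger if for every nonempty $A\subseteq X$ and every sequence $(\mathcal U_n:n\in\omega)$ of families of open sets with $\overline A\subseteq\bigcup\mathcal U_n$ for all $n$, there are finite $F_n\subseteq\overline A$ with $A\subseteq\bigcup_n st(F_n,\mathcal U_n)$. $e(X)$ is the supremum of cardinalities of closed discrete subsets of $X$ ($e(X)=\omega$ means every closed discrete subset is countable). $\mathfrak d$ is the minimal cardinality of a cofinal subset of $(\omega^\omega,\leq^* )$. *)

theory Defs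
  imports "HOL-Analysis.Analysis" "HOL-Library.Equipollence"
begin

definition st :: "'a set \<Rightarrow> 'a set set \<Rightarrow> 'a set" where
  "st A \<U> = \<Union>{U \<in> \<U>. U \<inter> A \<noteq> {}}"

definition set_strongly_star_Menger :: "'a topology \<Rightarrow> bool" where
  "set_strongly_star_Menger X \<longleftrightarrow>
    (\<forall>A \<U>. A \<noteq> {} \<and> A \<subseteq> topspace X \<and>
        (\<forall>n. (\<forall>U \<in> \<U> n. openin X U) \<and> X closure_of A \<subseteq> \<Union>(\<U> n)) \<longrightarrow>
      (\<exists>F :: nat \<Rightarrow> 'a set. (\<forall>n. finite (F n) \<and> F n \<subseteq> X closure_of A) \<and>
          A \<subseteq> (\<Union>n. st (F n) (\<U> n))))"

definition closed_discrete :: "'a topology \<Rightarrow> 'a set \<Rightarrow> bool" where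
  "closed_discrete X D \<longleftrightarrow> closedin X D \<and> subtopology X D = discrete_topology D"

definition extent_countable :: "'a topology \<Rightarrow> bool" where
  "extent_countable X \<longleftrightarrow> (\<forall>D. closed_discrete X D \<longrightarrow> countable D)"

definition le_star :: "(nat \<Rightarrow> nat) \<Rightarrow> (nat \<Rightarrow> nat) \<Rightarrow> bool" where
  "le_star f g \<longleftrightarrow> (\<forall>\<^sub>F n in sequentially. f n \<le> g n)"

definition dominating :: "(nat \<Rightarrow> nat) set \<Rightarrow> bool" where
  "dominating D \<longleftrightarrow> (\<forall>f. \<exists>g\<in>D. le_star f g)"

text \<open>|S| < \<dd>: S is strictly smaller than every dominating family
  (equivalently than the least cardinality of one).\<close>
definition less_than_dominating_number :: "'a set \<Rightarrow> bool" where
  "less_than_dominating_number S \<longleftrightarrow> (\<forall>D. dominating D \<longrightarrow> S \<prec> D)"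

end

theory Submission
  imports Defs
begin

lemma st_mono: "F \<subseteq> G \<Longrightarrow> st F \<U> \<subseteq> st G \<U>"
  unfolding st_def by blast

lemma kernel:
  assumes t1: "t1_space X" and op: "\<forall>U\<in>\<U>. openin X U" and cov: "C \<subseteq> \<Union>\<U>"
    and cl: "closedin X C"
  shows "\<exists>D\<subseteq>C. closed_discrete X D \<and> C \<subseteq> st D \<U>"
proof -
  define R where "R x y \<longleftrightarrow> (\<exists>U\<in>\<U>. x \<in> U \<and> y \<in> U)" for x y
  define \<D> where "\<D> = {D. D \<subseteq> C \<and> (\<forall>x\<in>D. \<forall>y\<in>D. R x y \<longrightarrow> x = y)}"
  have "\<forall>Ch\<in>chains \<D>. \<Union>Ch \<in> \<D>"
  proof
    fix Ch assume ch: "Ch \<in> chains \<D>"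
    have "\<Union>Ch \<subseteq> C" using ch unfolding chains_def \<D>_def by blast
    moreover have "\<forall>x\<in>\<Union>Ch. \<forall>y\<in>\<Union>Ch. R x y \<longrightarrow> x = y"
    proof (intro ballI impI)
      fix x y assume "x \<in> \<Union>Ch" "y \<in> \<Union>Ch" "R x y"
      then obtain D1 D2 where d: "D1 \<in> Ch" "D2 \<in> Ch" "x \<in> D1" "y \<in> D2" by blast
      with ch have "D1 \<subseteq> D2 \<or> D2 \<subseteq> D1" unfolding chains_def chain_subset_def by blast
      then show "x = y" using d ch \<open>R x y\<close> unfolding chains_def \<D>_def by blast
    qed
    ultimately show "\<Union>Ch \<in> \<D>" unfolding \<D>_def by blast
  qed
  then obtain M where M: "M \<in> \<D>" and mx: "\<forall>Y\<in>\<D>. M \<subseteq> Y \<longrightarrow> Y = M"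
    using Zorn_Lemma by blast
  have MC: "M \<subseteq> C" and Mi: "\<forall>x\<in>M. \<forall>y\<in>M. R x y \<longrightarrow> x = y" using M unfolding \<D>_def by auto
  have Ctop: "C \<subseteq> topspace X" using cl closedin_subset by blast
  have star: "C \<subseteq> st M \<U>"
  proof
    fix x assume xC: "x \<in> C"
    show "x \<in> st M \<U>"
    proof (rule ccontr)
      assume nx: "x \<notin> st M \<U>"
      have "insert x M \<in> \<D>"
        unfolding \<D>_def
      proof (intro CollectI conjI ballI impI)
        show "insert x M \<subseteq> C" using xC MC by blast
      next
        fix a b assume ab: "a \<in> insert x M" "b \<in> insert x M" "R a b"
        have nR: "\<not> R x y" "\<not> R y x" if "y \<in> M" for y
          using nx that unfolding R_def st_def by blast+
        show "a = b"
        proof (cases "a = x")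
          case True
          then show ?thesis using ab nR by blast
        next
          case False
          then have "a \<in> M" using ab by blast
          then show ?thesis using ab nR Mi by blast
        qed
      qed
      then have "insert x M = M" using mx by blast
      then have "x \<in> M" by blast
      then show False using nx xC cov unfolding st_def by blast
    qed
  qed
  have one: "\<exists>U. openin X U \<and> x \<in> U \<and> (\<forall>d\<in>M. \<forall>e\<in>M. d \<in> U \<and> e \<in> U \<longrightarrow> d = e)"
    if xC: "x \<in> C" for x
  proof -
    obtain U where "U \<in> \<U>" "x \<in> U" using cov xC by blast
    then show ?thesis using op Mi unfolding R_def by blast
  qed
  have clM: "closedin X M"
    unfolding closedin_def
  proof (intro conjI)
    show "M \<subseteq> topspace X" using MC Ctop by blast
    show "openin X (topspace X - M)"
      unfolding openin_subopen[of X "topspace X - M"]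
    proof
      fix x assume x: "x \<in> topspace X - M"
      show "\<exists>T. openin X T \<and> x \<in> T \<and> T \<subseteq> topspace X - M"
      proof (cases "x \<in> C")
        case False
        then show ?thesis using cl x MC unfolding closedin_def by blast
      next
        case True
        then obtain U where U: "openin X U" "x \<in> U" "\<forall>d\<in>M. \<forall>e\<in>M. d \<in> U \<and> e \<in> U \<longrightarrow> d = e"
          using one by blast
        show ?thesis
        proof (cases "U \<inter> M = {}")
          case True
          have "U \<subseteq> topspace X" using U(1) by (rule openin_subset)
          then have "U \<subseteq> topspace X - M" using True by blast
          then show ?thesis using U(1,2) by blast
        next
          case False
          then obtain d where d: "d \<in> U" "d \<in> M" by blast
          have opd: "openin X (U - {d})" using t1_space_openin_delete_alt[THEN iffD1, OF t1, rule_format, OF U(1)] .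
          have "U \<subseteq> topspace X" using U(1) by (rule openin_subset)
          moreover have "U \<inter> M \<subseteq> {d}" using U(3) d by blast
          ultimately have "U - {d} \<subseteq> topspace X - M" by blast
          moreover have "x \<in> U - {d}" using x d U by blast
          ultimately show ?thesis using opd by blast
        qed
      qed
    qed
  qed
  have "subtopology X M = discrete_topology M"
  proof -
    have "openin (subtopology X M) {d}" if dM: "d \<in> M" for d
    proof -
      have "d \<in> C" using MC dM by blast
      then obtain U where U: "openin X U" "d \<in> U" "\<forall>d\<in>M. \<forall>e\<in>M. d \<in> U \<and> e \<in> U \<longrightarrow> d = e"
        using one by blast
      then have eq: "{d} = U \<inter> M" using dM by blast
      show ?thesis unfolding openin_subtopology using U(1) eq by blast
    qed
    moreover have "topspace (subtopology X M) = M" using clM closedin_subset by auto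
    ultimately have "discrete_topology M = subtopology X M"
      using discrete_topology_unique[of M "subtopology X M"] by simp
    then show ?thesis by (rule sym)
  qed
  then show ?thesis using clM MC star unfolding closed_discrete_def by blast
qed

lemma dir1:
  assumes S: "set_strongly_star_Menger X" and D: "closed_discrete X D"
  shows "countable D"
proof (cases "D = {}")
  case True then show ?thesis by simp
next
  case False
  have clD: "closedin X D" and dis: "subtopology X D = discrete_topology D"
    using D unfolding closed_discrete_def by auto
  have Dtop: "D \<subseteq> topspace X" using clD closedin_subset by blast
  have "\<exists>U. openin X U \<and> U \<inter> D = {d}" if dD: "d \<in> D" for d
  proof -
    have "openin (discrete_topology D) {d}" using dD by simp
    then have "openin (subtopology X D) {d}" using dis by simp
    then obtain U where "openin X U" "{d} = U \<inter> D" unfolding openin_subtopology by blast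
    then show ?thesis by blast
  qed
  then obtain V where V: "\<And>d. d \<in> D \<Longrightarrow> openin X (V d) \<and> V d \<inter> D = {d}" by metis
  define \<U> where "\<U> = (\<lambda>n::nat. V ` D)"
  have cD: "X closure_of D = D" using clD by (rule closure_of_closedin)
  have hyp: "\<forall>n. (\<forall>U \<in> \<U> n. openin X U) \<and> X closure_of D \<subseteq> \<Union>(\<U> n)"
    unfolding \<U>_def cD using V by blast
  have "\<exists>F :: nat \<Rightarrow> 'a set. (\<forall>n. finite (F n) \<and> F n \<subseteq> X closure_of D) \<and>
          D \<subseteq> (\<Union>n. st (F n) (\<U> n))"
    using S[unfolded set_strongly_star_Menger_def, rule_format, of D \<U>] False Dtop hyp by simp
  then obtain F :: "nat \<Rightarrow> 'a set" where FF: "(\<forall>n. finite (F n) \<and> F n \<subseteq> X closure_of D) \<and>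
          D \<subseteq> (\<Union>n. st (F n) (\<U> n))"
    by (rule exE)
  have F: "\<forall>n. finite (F n) \<and> F n \<subseteq> X closure_of D" using FF by (rule conjunct1)
  have cov: "D \<subseteq> (\<Union>n. st (F n) (\<U> n))" using FF by (rule conjunct2)
  have "D \<subseteq> (\<Union>n. F n)"
  proof
    fix x assume xD: "x \<in> D"
    have "x \<in> (\<Union>n. st (F n) (\<U> n))" using subsetD[OF cov xD] .
    then obtain n where "x \<in> st (F n) (\<U> n)" by (rule UN_E)
    then obtain U where n: "U \<in> \<U> n" "x \<in> U" "U \<inter> F n \<noteq> {}" unfolding st_def by auto
    then obtain e where e: "e \<in> D" "U = V e" unfolding \<U>_def by auto
    have FD: "F n \<subseteq> D" using F cD by auto
    have Ve: "V e \<inter> D = {e}" using V e(1) by auto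
    have "x = e" using Ve xD n(2) e(2) by auto
    moreover have "e \<in> F n" using Ve FD n(3) e(2) by auto
    ultimately show "x \<in> (\<Union>n. F n)" by auto
  qed
  moreover have "countable (\<Union>n. F n)" using F by (simp add: countable_finite)
  ultimately show ?thesis using countable_subset by blast
qed

lemma dir2:
  assumes t1: "t1_space X" and small: "less_than_dominating_number (topspace X)"
    and ec: "extent_countable X"
  shows "set_strongly_star_Menger X"
  unfolding set_strongly_star_Menger_def
proof (intro allI impI)
  fix A and \<U> :: "nat \<Rightarrow> 'a set set"
  assume h: "A \<noteq> {} \<and> A \<subseteq> topspace X \<and> (\<forall>n. (\<forall>U \<in> \<U> n. openin X U) \<and> X closure_of A \<subseteq> \<Union>(\<U> n))"
  define C where "C = X closure_of A"
  have AC: "A \<subseteq> C" unfolding C_def using h closure_of_subset by blast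
  have "\<exists>D. D \<subseteq> C \<and> closed_discrete X D \<and> C \<subseteq> st D (\<U> n)" for n
    using kernel[OF t1, of "\<U> n" C] h unfolding C_def by auto
  then obtain D where D: "\<And>n. D n \<subseteq> C \<and> closed_discrete X (D n) \<and> C \<subseteq> st (D n) (\<U> n)"
    by metis
  have Dc: "countable (D n)" for n using ec D unfolding extent_countable_def by blast
  have Dne: "D n \<noteq> {}" for n
  proof
    assume "D n = {}"
    then have "st (D n) (\<U> n) = {}" unfolding st_def by blast
    then show False using D[of n] AC h by blast
  qed
  define e where "e n = from_nat_into (D n)" for n
  have re: "range (e n) = D n" for n unfolding e_def using Dne Dc by simp
  have ex: "\<exists>k. a \<in> st {e n k} (\<U> n)" if aA: "a \<in> A" for a n
  proof -
    have "a \<in> st (D n) (\<U> n)" using aA AC D by blast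
    then obtain U d where "U \<in> \<U> n" "a \<in> U" "d \<in> U" "d \<in> D n" unfolding st_def by blast
    moreover then obtain k where "d = e n k" using re by (metis rangeE)
    ultimately show ?thesis unfolding st_def by blast
  qed
  define f where "f a n = (LEAST k. a \<in> st {e n k} (\<U> n))" for a n
  have fa: "a \<in> st {e n (f a n)} (\<U> n)" if "a \<in> A" for a n
    unfolding f_def using ex[OF that] by (rule LeastI_ex)
  have "\<not> dominating (f ` A)"
  proof
    assume "dominating (f ` A)"
    then have "topspace X \<prec> f ` A" using small unfolding less_than_dominating_number_def by blast
    moreover have "f ` A \<lesssim> topspace X"
      using image_lepoll subset_imp_lepoll h lepoll_trans by metis
    ultimately have "topspace X \<prec> topspace X" using lesspoll_trans2 by blast
    then show False by simp
  qed
  then obtain g where g: "\<forall>s\<in>f ` A. \<not> le_star g s" unfolding dominating_def by blast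
  define F where "F n = e n ` {..<g n}" for n
  show "\<exists>F :: nat \<Rightarrow> 'a set. (\<forall>n. finite (F n) \<and> F n \<subseteq> X closure_of A) \<and>
          A \<subseteq> (\<Union>n. st (F n) (\<U> n))"
  proof (intro exI conjI allI)
    fix n
    show "finite (F n)" unfolding F_def by simp
    show "F n \<subseteq> X closure_of A" unfolding F_def C_def[symmetric] using re D by blast
  next
    show "A \<subseteq> (\<Union>n. st (F n) (\<U> n))"
    proof
      fix a assume aA: "a \<in> A"
      then have "\<not> le_star g (f a)" using g by blast
      then have "\<exists>\<^sub>F n in sequentially. \<not> g n \<le> f a n"
        unfolding le_star_def not_eventually by simp
      then have "\<exists>n. \<not> g n \<le> f a n" by (rule frequently_ex)
      then obtain n where n: "f a n < g n" by (auto simp: not_le)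
      then have "{e n (f a n)} \<subseteq> F n" unfolding F_def by blast
      then have "a \<in> st (F n) (\<U> n)" using st_mono fa[OF aA] by blast
      then show "a \<in> (\<Union>n. st (F n) (\<U> n))" by blast
    qed
  qed
qed

theorem corollary2p1:
  fixes X :: "'a topology"
  assumes "t1_space X"
    and "less_than_dominating_number (topspace X)"
  shows "set_strongly_star_Menger X \<longleftrightarrow> extent_countable X"
  using dir1 dir2[OF assms] unfolding extent_countable_def by blast

end
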